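(* Let $y$ be the solution of the problem $\varepsilon^2 y''(x)=f(x,y)$ on $(0,1)$, $y(0)=y(1)=0$, with $f$ and the Shishkin mesh $\{x_i\}_{i=0}^N$ as described in the context, and let $F$ be the discrete operator defined in the context. Assume that $\varepsilon\leqslant C_0/N$ for some constant $C_0>0$. Then there is a constant $C>0$ independent of $N$ and $\varepsilon$ such that, for the indices $i\in\{N/4,\ldots,N/2-1\}$ with $x_{i-1},x_i,x_{i+1}\in[x_{N/4},1/2]$, $$|(Fy)_i|\leqslant \frac{C}{N^2},$$ where $(Fy)_i$ denotes the $i$-th component of $F$ applied to the vector $(y(x_0),\ldots,y(x_N))^T$.
   Context: Problem: $\varepsilon^2y''(x)=f(x,y)$ on $(0,1)$, $y(0)=y(1)=0$, where $\varepsilon>0$ is a small parameter, $f\in C^k([0,1]\times\mathbb{R})$ for some $k\geq 2$, and $f_y=\partial f/\partial y\geq m>0$ on $[0,1]\times\mathbb{R}$ for a constant $m$; this problem has a unique solution $y$. Shishkin mesh: $N$ is a positive integer divisible by 4, $\lambda=\min\{1/4,\,2\varepsilon\ln N/\sqrt{m}\}$, and it is assumed that $\lambda=2\varepsilon\ln N/\sqrt{m}$. The mesh $0=x_0<x_1<\cdots<x_N=1$ is equidistant on each of $[0,\lambda]$ (with $N/4$ subintervals), $[\lambda,1-\lambda]$ (with $N/2$ subintervals) and $[1-\lambda,1]$ (with $N/4$ subintervals); thus $x_{N/4}=\lambda$, $x_{3N/4}=1-\lambda$, $x_{N/2}=1/2$, subintervals in $[0,\lambda]\cup[1-\lambda,1]$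 have length $4\lambda/N$ and those in $[\lambda,1-\lambda]$ have length $2(1-2\lambda)/N$. Scheme: $\gamma$ is a constant with $\gamma\geq f_y$, and $\beta=\sqrt{\gamma}/\varepsilon$. For $i=1,\ldots,N$ let $\ell_i=x_i-x_{i-1}$, $d_i=\beta/\tanh(\beta\ell_i)$, $a_i=\beta/\sinh(\beta\ell_i)$, $\Delta d_i=d_i-a_i$. For $v=(v_0,\ldots,v_N)^T\in\mathbb{R}^{N+1}$ define $Fv\in\mathbb{R}^{N+1}$ by $(Fv)_0=v_0$, $(Fv)_N=v_N$ and, for $i=1,\ldots,N-1$, $$(Fv)_i=\frac{\gamma}{\Delta d_i+\Delta d_{i+1}}\Big[\tfrac{a_i+d_i}{2}v_{i-1}-\big(\tfrac{a_i+d_i}{2}+\tfrac{a_{i+1}+d_{i+1}}{2}\big)v_i+\tfrac{a_{i+1}+d_{i+1}}{2}v_{i+1}-\tfrac{\Delta d_i}{\gamma}f\big(\tfrac{x_{i-1}+x_i}{2},\tfrac{v_{i-1}+v_i}{2}\big)-\tfrac{\Delta d_{i+1}}{\gamma}f\big(\tfrac{x_{i}+x_{i+1}}{2},\tfrac{v_{i}+v_{i+1}}{2}\big)\Big].$$ *)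

theory Defs
  imports "HOL-Analysis.Analysis"
begin

definition C2_on :: "(real \<times> real) set \<Rightarrow> (real \<times> real \<Rightarrow> real) \<Rightarrow> bool" where
  "C2_on S g \<longleftrightarrow>
     (\<exists>D :: real \<times> real \<Rightarrow> ((real \<times> real) \<Rightarrow>\<^sub>L real).
      \<exists>D2 :: real \<times> real \<Rightarrow> ((real \<times> real) \<Rightarrow>\<^sub>L ((real \<times> real) \<Rightarrow>\<^sub>L real)).
        (\<forall>p\<in>S. (g has_derivative blinfun_apply (D p)) (at p within S)) \<and>
        (\<forall>p\<in>S. (D has_derivative blinfun_apply (D2 p)) (at p within S)) \<and>
        continuous_on S D2)"

definition bvp_solution :: "real \<Rightarrow> (real \<Rightarrow> real \<Rightarrow> real) \<Rightarrow> (real \<Rightarrow> real) \<Rightarrow> bool" where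
  "bvp_solution eps f y \<longleftrightarrow>
     continuous_on {0..1} y \<and> y 0 = 0 \<and> y 1 = 0 \<and>
     (\<exists>y' y''. \<forall>x\<in>{0<..<1}.
        (y has_real_derivative y' x) (at x) \<and>
        (y' has_real_derivative y'' x) (at x) \<and>
        eps^2 * y'' x = f x (y x))"

definition shishkin_lambda :: "real \<Rightarrow> real \<Rightarrow> nat \<Rightarrow> real" where
  "shishkin_lambda eps m N = min (1/4) (2 * eps * ln (real N) / sqrt m)"

definition shishkin_mesh :: "real \<Rightarrow> real \<Rightarrow> nat \<Rightarrow> nat \<Rightarrow> real" where
  "shishkin_mesh eps m N i =
     (let lam = shishkin_lambda eps m N in
      if i \<le> N div 4 then real i * (4 * lam / real N)
      else if i \<le> 3 * N div 4 then lam + real (i - N div 4) * (2 * (1 - 2 * lam) / real N)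
      else (1 - lam) + real (i - 3 * N div 4) * (4 * lam / real N))"

definition sch_beta :: "real \<Rightarrow> real \<Rightarrow> real" where
  "sch_beta gam eps = sqrt gam / eps"

definition sch_d :: "real \<Rightarrow> real \<Rightarrow> (nat \<Rightarrow> real) \<Rightarrow> nat \<Rightarrow> real" where
  "sch_d gam eps x i = sch_beta gam eps / tanh (sch_beta gam eps * (x i - x (i - 1)))"

definition sch_a :: "real \<Rightarrow> real \<Rightarrow> (nat \<Rightarrow> real) \<Rightarrow> nat \<Rightarrow> real" where
  "sch_a gam eps x i = sch_beta gam eps / sinh (sch_beta gam eps * (x i - x (i - 1)))"

definition sch_Dd :: "real \<Rightarrow> real \<Rightarrow> (nat \<Rightarrow> real) \<Rightarrow> nat \<Rightarrow> real" where
  "sch_Dd gam eps x i = sch_d gam eps x i - sch_a gam eps x i"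

text \<open>The discrete operator F on vectors v = (v_0,...,v_N); components outside 0..N are set to 0.\<close>
definition disc_F :: "(real \<Rightarrow> real \<Rightarrow> real) \<Rightarrow> real \<Rightarrow> real \<Rightarrow> (nat \<Rightarrow> real) \<Rightarrow> nat
                      \<Rightarrow> (nat \<Rightarrow> real) \<Rightarrow> nat \<Rightarrow> real" where
  "disc_F f gam eps x N v i =
    (if i = 0 then v 0
     else if i = N then v N
     else if i < N then
       (let ai = sch_a gam eps x i; di = sch_d gam eps x i;
            ai1 = sch_a gam eps x (i + 1); di1 = sch_d gam eps x (i + 1);
            Ddi = sch_Dd gam eps x i; Ddi1 = sch_Dd gam eps x (i + 1)
        in gam / (Ddi + Ddi1) *
           ((ai + di) / 2 * v (i - 1)
            - ((ai + di) / 2 + (ai1 + di1) / 2) * v i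
            + (ai1 + di1) / 2 * v (i + 1)
            - Ddi / gam * f ((x (i - 1) + x i) / 2) ((v (i - 1) + v i) / 2)
            - Ddi1 / gam * f ((x i + x (i + 1)) / 2) ((v i + v (i + 1)) / 2)))
     else 0)"

end

theory Submission
  imports Defs
begin

lemma minprinc:
  fixes z za zb :: "real \<Rightarrow> real"
  assumes cont: "continuous_on {0..1} z" and z0: "z 0 \<ge> 0" and z1e: "z 1 \<ge> 0"
    and d1: "\<And>x. x \<in> {0<..<1} \<Longrightarrow> (z has_real_derivative za x) (at x)"
    and d2: "\<And>x. x \<in> {0<..<1} \<Longrightarrow> (za has_real_derivative zb x) (at x)"
    and neg: "\<And>x. x \<in> {0<..<1} \<Longrightarrow> z x < 0 \<Longrightarrow> zb x < 0"
    and x: "x \<in> {0..1}"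
  shows "z x \<ge> 0"
proof (rule ccontr)
  assume nx: "\<not> z x \<ge> 0"
  obtain xs where xs: "xs \<in> {0..1}" "\<forall>y\<in>{0..1}. z xs \<le> z y"
    using continuous_attains_inf[OF compact_Icc _ cont] by auto
  have "z xs \<le> z x" using xs x by auto
  then have zn: "z xs < 0" using nx by linarith
  have "xs \<noteq> 0" "xs \<noteq> 1" using zn z0 z1e by auto
  then have xi: "xs \<in> {0<..<1}" using xs by auto
  have dpos: "min xs (1 - xs) > 0" using xi by auto
  have "za xs = 0"
  proof (rule DERIV_local_min[OF d1[OF xi] dpos], intro allI impI)
    fix y assume "\<bar>xs - y\<bar> < min xs (1 - xs)"
    then have "y \<in> {0..1}" by auto
    then show "z xs \<le> z y" using xs by auto
  qed
  moreover have "zb xs < 0" using neg[OF xi zn] .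
  then obtain d where d: "d > 0" "\<And>h. h > 0 \<Longrightarrow> h < d \<Longrightarrow> za xs > za (xs + h)"
    using DERIV_neg_dec_right[OF d2[OF xi]] by blast
  define h where "h = min d (1 - xs) / 2"
  have "min d (1 - xs) \<le> 1 - xs" "min d (1 - xs) \<le> d" "min d (1 - xs) > 0" using d xi by auto
  then have h: "h > 0" "h < d" "xs + h < 1" unfolding h_def using xi by (auto simp: min_def)
  obtain xi' where xi': "xs < xi'" "xi' < xs + h" "z (xs + h) - z xs = (xs + h - xs) * za xi'"
    using MVT2[of xs "xs + h" z za] d1 h xi by (smt (verit) greaterThanLessThan_iff)
  have "za xi' < za xs" using d(2)[of "xi' - xs"] xi' h by simp
  ultimately have "za xi' < 0" by simp
  then have "h * za xi' < 0" using h(1) by (simp add: mult_pos_neg)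
  then have "z (xs + h) < z xs" using xi'(3) by simp
  moreover have "xs + h \<in> {0..1}" using h xi by auto
  ultimately show False using xs by force
qed

lemma avg_le: "(a::real) \<le> X \<Longrightarrow> b \<le> X \<Longrightarrow> X \<le> Y \<Longrightarrow> (a + b) / 2 \<le> Y"
  unfolding add_divide_distrib by linarith

lemma sdiff:
  fixes g ga gb :: "real \<Rightarrow> real"
  assumes t: "t > 0"
    and d: "\<And>x. x \<in> {c-t..c+t} \<Longrightarrow> (g has_real_derivative ga x) (at x) \<and> (ga has_real_derivative gb x) (at x) \<and> \<bar>gb x\<bar> \<le> K"
  shows "\<bar>g (c+t) - 2 * g c + g (c-t)\<bar> \<le> 2 * K * t^2"
proof -
  obtain x1 where x1: "c < x1" "x1 < c + t" "g (c+t) - g c = (c + t - c) * ga x1"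
    using MVT2[of c "c+t" g ga] d t by force
  obtain x2 where x2: "c - t < x2" "x2 < c" "g c - g (c-t) = (c - (c - t)) * ga x2"
    using MVT2[of "c-t" c g ga] d t by force
  obtain x3 where x3: "x2 < x3" "x3 < x1" "ga x1 - ga x2 = (x1 - x2) * gb x3"
    using MVT2[of x2 x1 ga gb] d x1 x2 by force
  have K3: "\<bar>gb x3\<bar> \<le> K" using d[of x3] x1 x2 x3 by auto
  have "g (c+t) - 2 * g c + g (c-t) = t * (ga x1 - ga x2)" using x1(3) x2(3) by (simp add: algebra_simps)
  then have "g (c+t) - 2 * g c + g (c-t) = t * ((x1 - x2) * gb x3)" using x3(3) by simp
  then have "\<bar>g (c+t) - 2 * g c + g (c-t)\<bar> = t * ((x1 - x2) * \<bar>gb x3\<bar>)" using t x1 x2 by (simp add: abs_mult)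
  also have "\<dots> \<le> t * ((2*t) * K)"
    using K3 t x1 x2 by (intro mult_left_mono mult_mono) auto
  finally show ?thesis by (simp add: power2_eq_square algebra_simps)
qed

lemma coef_ratio:
  fixes be h :: real
  assumes be: "be > 0" and h: "h > 0"
  shows "be / tanh (be * h) - be / sinh (be * h) > 0"
    and "(be / sinh (be * h) + be / tanh (be * h)) / (be / tanh (be * h) - be / sinh (be * h))
         = (cosh (be*h) + 1) / (cosh (be*h) - 1)"
proof -
  define t where "t = be * h"
  have t: "t > 0" using be h by (simp add: t_def)
  have sh: "sinh t > 0" using t by simp
  have ch: "cosh t > 1" using cosh_real_nonneg_less_iff[of 0 t] t by simp
  have dd: "be / tanh t = be * cosh t / sinh t" by (simp add: tanh_def)
  have "be / tanh t - be / sinh t = be * (cosh t - 1) / sinh t" using sh by (simp add: dd field_simps)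
  moreover have "be * (cosh t - 1) / sinh t > 0" using be sh ch by simp
  ultimately show "be / tanh (be * h) - be / sinh (be * h) > 0" by (simp add: t_def)
  have "(be / sinh t + be / tanh t) / (be / tanh t - be / sinh t) = (cosh t + 1) / (cosh t - 1)"
    using sh ch be by (simp add: dd field_simps)
  then show "(be / sinh (be * h) + be / tanh (be * h)) / (be / tanh (be * h) - be / sinh (be * h))
         = (cosh (be*h) + 1) / (cosh (be*h) - 1)" by (simp add: t_def)
qed

lemma Fform:
  fixes gam Dd a d ym yc yp f1 f2 :: real
  assumes "gam \<noteq> 0" "Dd \<noteq> 0"
  shows "gam / (Dd + Dd) * ((a + d) / 2 * ym - ((a + d) / 2 + (a + d) / 2) * yc + (a + d) / 2 * yp
          - Dd / gam * f1 - Dd / gam * f2)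
        = gam * (a + d) / (4 * Dd) * (ym - 2 * yc + yp) - (f1 + f2) / 2"
  using assms by (simp add: field_simps)

lemma mesh_mid:
  assumes N: "N = 4 * k" "k > 0" and j: "k \<le> j" "j \<le> 3 * k"
  shows "shishkin_mesh eps m N j = shishkin_lambda eps m N + real (j - k) * (2 * (1 - 2 * shishkin_lambda eps m N) / real N)"
proof (cases "j = k")
  case True
  then show ?thesis using N by (simp add: shishkin_mesh_def Let_def)
next
  case False
  then have "\<not> j \<le> N div 4" "j \<le> 3 * N div 4" using N j by auto
  then show ?thesis by (simp add: shishkin_mesh_def Let_def N(1))
qed

lemma mesh_low:
  assumes N: "N = 4 * k" and j: "j \<le> k"
  shows "shishkin_mesh eps m N j = real j * (4 * shishkin_lambda eps m N / real N)"
  using assms by (simp add: shishkin_mesh_def Let_def)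

locale setting =
  fixes f fy :: "real \<Rightarrow> real \<Rightarrow> real" and m gam :: real
    and D :: "real \<times> real \<Rightarrow> ((real \<times> real) \<Rightarrow>\<^sub>L real)"
    and D2 :: "real \<times> real \<Rightarrow> ((real \<times> real) \<Rightarrow>\<^sub>L ((real \<times> real) \<Rightarrow>\<^sub>L real))"
  assumes dF: "\<And>p. p \<in> {0..1} \<times> UNIV \<Longrightarrow> ((\<lambda>p. f (fst p) (snd p)) has_derivative blinfun_apply (D p)) (at p within {0..1} \<times> UNIV)"
    and dD: "\<And>p. p \<in> {0..1} \<times> UNIV \<Longrightarrow> (D has_derivative blinfun_apply (D2 p)) (at p within {0..1} \<times> UNIV)"
    and cD2: "continuous_on ({0..1} \<times> UNIV) D2"
    and fy_deriv: "\<forall>x\<in>{0..1}. \<forall>v. (f x has_real_derivative fy x v) (at v)"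
    and m_pos: "m > 0"
    and fy_lower: "\<forall>x\<in>{0..1}. \<forall>v. m \<le> fy x v"
    and fy_upper: "\<forall>x\<in>{0..1}. \<forall>v. fy x v \<le> gam"
begin

lemma mono_f:
  assumes x: "x \<in> {0..1}" and le: "v1 \<le> v2"
  shows "m * (v2 - v1) \<le> f x v2 - f x v1 \<and> f x v2 - f x v1 \<le> gam * (v2 - v1)"
proof (cases "v1 = v2")
  case False
  then have "v1 < v2" using le by simp
  then obtain z where "v1 < z" "z < v2" "f x v2 - f x v1 = (v2 - v1) * fy x z"
    using MVT2[of v1 v2 "f x" "fy x"] fy_deriv x by blast
  moreover have "m \<le> fy x z" "fy x z \<le> gam" using fy_lower fy_upper x by auto
  ultimately show ?thesis using \<open>v1 < v2\<close>
    by (simp add: mult.commute mult_right_mono)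
qed simp

lemma gam_pos: "gam > 0"
proof -
  have "m \<le> fy 0 0" "fy 0 0 \<le> gam" using fy_lower fy_upper by auto
  then show ?thesis using m_pos by linarith
qed

lemma cont_fx: "x \<in> {0..1} \<Longrightarrow> continuous_on A (f x)"
  by (rule continuous_at_imp_continuous_on) (use fy_deriv DERIV_isCont in blast)

lemma root_ex1: assumes x: "x \<in> {0..1}" shows "\<exists>!v. f x v = 0"
proof -
  let ?c = "\<bar>f x 0\<bar> / m"
  have c0: "?c \<ge> 0" using m_pos by simp
  have "m * (0 - (-?c)) \<le> f x 0 - f x (-?c)" using mono_f[OF x, of "-?c" 0] c0 by simp
  hence l: "f x (-?c) \<le> 0" using m_pos by simp
  have "m * (?c - 0) \<le> f x ?c - f x 0" using mono_f[OF x, of 0 ?c] c0 by simp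
  hence r: "0 \<le> f x ?c" using m_pos by simp
  obtain v where "f x v = 0" using IVT'[of "f x" "-?c" 0 ?c] l r c0 cont_fx[OF x] by auto
  moreover have "w = v" if "f x w = 0" for w
  proof (rule ccontr)
    assume "w \<noteq> v"
    then consider "w < v" | "v < w" by linarith
    then show False
    proof cases
      case 1 then have "m * (v - w) \<le> f x v - f x w" using mono_f[OF x, of w v] by simp
      then show False using 1 m_pos that \<open>f x v = 0\<close> by (smt (verit) mult_pos_pos)
    next
      case 2 then have "m * (w - v) \<le> f x w - f x v" using mono_f[OF x, of v w] by simp
      then show False using 2 m_pos that \<open>f x v = 0\<close> by (smt (verit) mult_pos_pos)
    qed
  qed
  ultimately show ?thesis by blast
qed

definition "g x = (THE v. f x v = 0)"

lemma g_root: "x \<in> {0..1} \<Longrightarrow> f x (g x) = 0"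
  unfolding g_def by (rule theI'[OF root_ex1])

lemma lip_f: assumes x: "x \<in> {0..1}" shows "\<bar>f x v - f x w\<bar> \<le> gam * \<bar>v - w\<bar>"
proof (cases "w \<le> v")
  case True then show ?thesis using mono_f[OF x True] m_pos
    by (smt (verit) mult_nonneg_nonneg)
next
  case False then show ?thesis using mono_f[OF x, of v w] m_pos
    by (smt (verit) mult_nonneg_nonneg)
qed

lemma lowlip_f: assumes x: "x \<in> {0..1}" shows "m * \<bar>v - w\<bar> \<le> \<bar>f x v - f x w\<bar>"
proof (cases "w \<le> v")
  case True then show ?thesis using mono_f[OF x True] m_pos
    by (smt (verit) mult_nonneg_nonneg)
next
  case False then show ?thesis using mono_f[OF x, of v w] m_pos
    by (smt (verit) mult_nonneg_nonneg)
qed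

lemma g_lip: "x \<in> {0..1} \<Longrightarrow> x' \<in> {0..1} \<Longrightarrow> m * \<bar>g x - g x'\<bar> \<le> \<bar>f x (g x')\<bar>"
  using lowlip_f[of x "g x" "g x'"] g_root by simp

lemma contF: "continuous_on ({0..1} \<times> UNIV) (\<lambda>p. f (fst p) (snd p))"
  using dF by (rule has_derivative_continuous_on)

lemma g_cont: "continuous_on {0..1} g"
  unfolding continuous_on_iff
proof (intro ballI allI impI)
  fix x0 :: real and e :: real assume x0: "x0 \<in> {0..1}" and e: "e > 0"
  have "continuous_on {0..1} ((\<lambda>p. f (fst p) (snd p)) \<circ> (\<lambda>x. (x, g x0)))"
    by (rule continuous_on_compose[OF _ continuous_on_subset[OF contF]]) (auto intro!: continuous_intros)
  then have "continuous_on {0..1} (\<lambda>x. f x (g x0))" by (simp add: comp_def)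
  moreover have em: "e * m > 0" using e m_pos by simp
  ultimately obtain d where d: "d > 0" "\<And>x'. x' \<in> {0..1} \<Longrightarrow> dist x' x0 < d \<Longrightarrow> dist (f x' (g x0)) (f x0 (g x0)) < e * m"
    using x0 unfolding continuous_on_iff by metis
  have "dist (g x') (g x0) < e" if x': "x' \<in> {0..1}" "dist x' x0 < d" for x'
  proof -
    have "m * \<bar>g x' - g x0\<bar> \<le> \<bar>f x' (g x0)\<bar>" using g_lip x' x0 by simp
    also have "\<bar>f x' (g x0)\<bar> < e * m" using d(2)[OF x'] g_root[OF x0] by (simp add: dist_real_def)
    finally have "\<bar>g x' - g x0\<bar> * m < e * m" by (simp add: mult.commute)
    then show ?thesis using m_pos by (simp add: dist_real_def)
  qed
  then show "\<exists>d>0. \<forall>x'\<in>{0..1}. dist x' x0 < d \<longrightarrow> dist (g x') (g x0) < e"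
    using d(1) by blast
qed


lemma fy_D: assumes x: "x \<in> {0..1}" shows "blinfun_apply (D (x, v)) (0, 1) = fy x v"
proof -
  let ?F = "\<lambda>p. f (fst p) (snd p)"
  have h1: "((\<lambda>v'. (x, v')) has_derivative (\<lambda>t. (0, t))) (at v within UNIV)"
    by (auto intro!: derivative_eq_intros)
  have h2: "(?F has_derivative blinfun_apply (D (x, v))) (at ((\<lambda>v'. (x, v')) v) within ((\<lambda>v'. (x, v')) ` UNIV))"
    by (rule has_derivative_subset[OF dF]) (use x in auto)
  have "((?F \<circ> (\<lambda>v'. (x, v'))) has_derivative (blinfun_apply (D (x, v)) \<circ> (\<lambda>t. (0, t)))) (at v)"
    using diff_chain_within[OF h1 h2] by simp
  then have "(f x has_derivative (\<lambda>t. blinfun_apply (D (x, v)) (0, t))) (at v)"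
    by (simp add: comp_def)
  moreover have "(f x has_derivative (\<lambda>t. fy x v * t)) (at v)"
    using fy_deriv x by (simp add: has_field_derivative_def)
  ultimately have "(\<lambda>t. blinfun_apply (D (x, v)) (0, t)) = (\<lambda>t. fy x v * t)"
    by (rule has_derivative_unique)
  then show ?thesis by (metis mult.right_neutral)
qed

definition "A x = blinfun_apply (D (x, g x)) (1, 0)"
definition "B x = blinfun_apply (D (x, g x)) (0, 1)"

lemma B_eq: "x \<in> {0..1} \<Longrightarrow> B x = fy x (g x)"
  unfolding B_def by (rule fy_D)

lemma B_bounds: "x \<in> {0..1} \<Longrightarrow> m \<le> B x \<and> B x \<le> gam"
  using B_eq fy_lower fy_upper by auto

lemma g_deriv:
  assumes x0: "x0 \<in> {0<..<1}"
  shows "(g has_real_derivative (-(A x0 / B x0))) (at x0)"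
proof -
  let ?F = "\<lambda>p. f (fst p) (snd p)"
  define p0 where "p0 = (x0, g x0)"
  define L where "L = D p0"
  have x01: "x0 \<in> {0..1}" using x0 by auto
  have "(?F has_derivative blinfun_apply L) (at p0 within {0..1}\<times>UNIV)"
    using dF[of p0] x01 by (simp add: p0_def L_def)
  moreover have "at p0 within {0..1}\<times>UNIV = at p0"
    by (rule at_within_open_subset[of _ "{0<..<1}\<times>UNIV"]) (use x0 in \<open>auto simp: p0_def intro: open_Times\<close>)
  ultimately have dat: "(?F has_derivative blinfun_apply L) (at p0)" by simp
  then have lim: "((\<lambda>p. norm ((?F p - ?F p0) - blinfun_apply L (p - p0)) / norm (p - p0)) \<longlongrightarrow> 0) (at p0)"
    unfolding has_derivative_iff_norm by simp
  have Bm: "B x0 \<ge> m" using B_bounds x01 by auto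
  define a where "a = A x0"
  define b where "b = B x0"
  have bm: "b \<ge> m" using Bm b_def by simp
  have Aeq: "blinfun_apply L (1,0) = a" "blinfun_apply L (0,1) = b"
    by (simp_all add: A_def B_def L_def p0_def a_def b_def)
  have lin: "blinfun_apply L (u, w) = u * a + w * b" for u w
  proof -
    have "(u,w) = u *\<^sub>R (1,0) + w *\<^sub>R (0,1)" by simp
    then have "blinfun_apply L (u,w) = blinfun_apply L (u *\<^sub>R (1,0)) + blinfun_apply L (w *\<^sub>R (0,1))"
      by (metis blinfun.add_right)
    moreover have "blinfun_apply L (u,0) = u * a" using blinfun.scaleR_right[of L u "(1,0)"] Aeq by simp
    moreover have "blinfun_apply L (0,w) = w * b" using blinfun.scaleR_right[of L w "(0,1)"] Aeq by simp
    ultimately show ?thesis by simp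
  qed
  define c where "c = 2*\<bar>a\<bar>/m + 1"
  have c1: "c \<ge> 1" using m_pos by (simp add: c_def)
  show ?thesis
    unfolding has_field_derivative_iff LIM_eq a_def[symmetric] b_def[symmetric]
  proof (intro allI impI)
    fix r :: real assume r: "r > 0"
    define e where "e = min (m/2) (r*m/(2*(1+c)))"
    have e: "e > 0" using r m_pos c1 by (simp add: e_def)
    have em: "e \<le> m/2" "e \<le> r*m/(2*(1+c))" unfolding e_def by (rule min.cobounded1, rule min.cobounded2)
    obtain s1 where s1: "s1 > 0" "\<And>p. p \<noteq> p0 \<and> norm (p - p0) < s1 \<Longrightarrow>
        norm (norm ((?F p - ?F p0) - blinfun_apply L (p - p0)) / norm (p - p0) - 0) < e"
      using lim e unfolding LIM_eq by blast
    have s1h: "s1/2 > 0" using s1 by simp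
    obtain s2 where s2: "s2 > 0" "\<And>x'. x' \<in> {0..1} \<Longrightarrow> dist x' x0 < s2 \<Longrightarrow> dist (g x') (g x0) < s1/2"
      using g_cont x01 s1h unfolding continuous_on_iff by metis
    define s where "s = min (min s2 (s1/2)) (min x0 (1-x0))"
    have spos: "s > 0" using s2 s1 x0 by (simp add: s_def)
    show "\<exists>s>0. \<forall>x. x \<noteq> x0 \<and> norm (x - x0) < s \<longrightarrow> norm ((g x - g x0)/(x - x0) - -(a/b)) < r"
    proof (intro exI conjI allI impI)
      show "s > 0" by (rule spos)
      fix x assume xa: "x \<noteq> x0 \<and> norm (x - x0) < s"
      define dx where "dx = x - x0"
      define dg where "dg = g x - g x0"
      have dxne: "dx \<noteq> 0" using xa dx_def by simp
      have x1: "x \<in> {0..1}" using xa unfolding s_def by auto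
      have dxs: "\<bar>dx\<bar> < s1/2" "\<bar>dx\<bar> < s2" using xa unfolding s_def dx_def by auto
      have dgs: "\<bar>dg\<bar> < s1/2" using s2(2)[OF x1] dxs by (simp add: dist_real_def dx_def dg_def)
      have pd: "(x, g x) - p0 = (dx, dg)" by (simp add: p0_def dx_def dg_def)
      have pne: "(x, g x) \<noteq> p0" using dxne p0_def dx_def by auto
      have pnorm: "norm ((x, g x) - p0) \<le> \<bar>dx\<bar> + \<bar>dg\<bar>" using norm_Pair_le[of dx dg] pd by simp
      have pnpos: "norm ((x, g x) - p0) > 0" using pne by simp
      have "norm ((x, g x) - p0) < s1" using pnorm dxs dgs by linarith
      then have "norm (norm ((?F (x, g x) - ?F p0) - blinfun_apply L ((x, g x) - p0)) / norm ((x, g x) - p0) - 0) < e"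
        using s1(2) pne by blast
      moreover have "?F (x, g x) = 0" "?F p0 = 0" using g_root x1 x01 by (simp_all add: p0_def)
      ultimately have "\<bar>- (dx * a) - dg * b\<bar> / norm ((x, g x) - p0) < e" using pd lin by simp
      moreover have "\<bar>- (dx * a) - dg * b\<bar> = \<bar>dx * a + dg * b\<bar>" by linarith
      ultimately have "\<bar>dx * a + dg * b\<bar> / norm ((x, g x) - p0) < e" by simp
      then have "\<bar>dx * a + dg * b\<bar> < e * norm ((x, g x) - p0)" using pnpos by (simp add: divide_less_eq)
      also have "\<dots> \<le> e * (\<bar>dx\<bar> + \<bar>dg\<bar>)" using pnorm e by (simp add: mult_left_mono)
      finally have R: "\<bar>dx * a + dg * b\<bar> \<le> e * (\<bar>dx\<bar> + \<bar>dg\<bar>)" by simp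
      have "\<bar>dg\<bar> * b \<le> \<bar>dx\<bar> * \<bar>a\<bar> + \<bar>dx * a + dg * b\<bar>"
      proof -
        have "\<bar>dg * b\<bar> \<le> \<bar>dx * a\<bar> + \<bar>dx * a + dg * b\<bar>" by linarith
        then show ?thesis using bm m_pos by (simp add: abs_mult)
      qed
      then have "\<bar>dg\<bar> * b - e * \<bar>dg\<bar> \<le> \<bar>dx\<bar> * (\<bar>a\<bar> + e)" using R by (simp add: algebra_simps)
      moreover have "\<bar>dg\<bar> * (m/2) \<le> \<bar>dg\<bar> * b - e * \<bar>dg\<bar>"
      proof -
        have "m/2 \<le> b - e" using bm em by linarith
        then have "\<bar>dg\<bar> * (m/2) \<le> \<bar>dg\<bar> * (b - e)" by (rule mult_left_mono) simp
        then show ?thesis by (simp add: algebra_simps)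
      qed
      moreover have "\<bar>dx\<bar> * (\<bar>a\<bar> + e) \<le> \<bar>dx\<bar> * (\<bar>a\<bar> + m/2)" using em by (simp add: mult_left_mono)
      ultimately have "\<bar>dg\<bar> * (m/2) \<le> \<bar>dx\<bar> * (\<bar>a\<bar> + m/2)" by linarith
      then have dgc: "\<bar>dg\<bar> \<le> c * \<bar>dx\<bar>" using m_pos unfolding c_def
        by (simp add: field_simps)
      have bpos: "b > 0" using bm m_pos by simp
      have "(g x - g x0)/(x - x0) - -(a/b) = (dx * a + dg * b) / (dx * b)"
        using dxne bpos by (simp add: dx_def dg_def field_simps)
      then have "norm ((g x - g x0)/(x - x0) - -(a/b)) = \<bar>dx * a + dg * b\<bar> / (\<bar>dx\<bar> * b)"
        using bpos by (simp add: abs_mult)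
      also have "\<dots> \<le> e * (\<bar>dx\<bar> + c * \<bar>dx\<bar>) / (\<bar>dx\<bar> * m)"
      proof (rule frac_le)
        show "0 \<le> e * (\<bar>dx\<bar> + c * \<bar>dx\<bar>)" using e c1 by simp
        show "\<bar>dx * a + dg * b\<bar> \<le> e * (\<bar>dx\<bar> + c * \<bar>dx\<bar>)" using R dgc e
          by (smt (verit) mult_left_mono)
        show "0 < \<bar>dx\<bar> * m" using dxne m_pos by simp
        show "\<bar>dx\<bar> * m \<le> \<bar>dx\<bar> * b" using bm by (simp add: mult_left_mono)
      qed
      also have "\<dots> = e * (1 + c) / m" using dxne m_pos by (simp add: field_simps)
      also have "\<dots> \<le> r / 2" using em(2) m_pos c1 by (simp add: field_simps)
      also have "\<dots> < r" using r by simp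
      finally show "norm ((g x - g x0)/(x - x0) - -(a/b)) < r" .
    qed
  qed
qed


definition "gd x = -(A x / B x)"
definition "A' x = blinfun_apply (blinfun_apply (D2 (x, g x)) (1, gd x)) (1, 0)"
definition "B' x = blinfun_apply (blinfun_apply (D2 (x, g x)) (1, gd x)) (0, 1)"

lemma DDp:
  assumes x: "x \<in> {0<..<1}"
  shows "((\<lambda>t. D (t, g t)) has_derivative (\<lambda>t. blinfun_apply (D2 (x, g x)) (t *\<^sub>R (1, gd x)))) (at x)"
proof -
  have gx: "(g has_derivative (\<lambda>t. gd x * t)) (at x)"
    using g_deriv[OF x] unfolding has_field_derivative_def gd_def[symmetric] .
  have p: "((\<lambda>t. (t, g t)) has_derivative (\<lambda>t. (t, gd x * t))) (at x)"
    by (rule has_derivative_Pair[OF has_derivative_ident gx])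
  have x01: "x \<in> {0..1}" using x by auto
  have "(D has_derivative blinfun_apply (D2 (x, g x))) (at (x, g x) within {0..1}\<times>UNIV)"
    using dD x01 by simp
  moreover have "at (x, g x) within {0..1}\<times>UNIV = at (x, g x)"
    by (rule at_within_open_subset[of _ "{0<..<1}\<times>UNIV"]) (use x in \<open>auto intro: open_Times\<close>)
  ultimately have dd: "(D has_derivative blinfun_apply (D2 (x, g x))) (at ((\<lambda>t. (t, g t)) x))" by simp
  have "((D \<circ> (\<lambda>t. (t, g t))) has_derivative (blinfun_apply (D2 (x, g x)) \<circ> (\<lambda>t. (t, gd x * t)))) (at x)"
    by (rule diff_chain_at[OF p dd])
  moreover have "(\<lambda>t. (t, gd x * t)) = (\<lambda>t. t *\<^sub>R (1, gd x))" by auto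
  ultimately show ?thesis by (simp add: comp_def)
qed

lemma A_deriv: assumes x: "x \<in> {0<..<1}" shows "(A has_real_derivative A' x) (at x)"
proof -
  have "((\<lambda>t. blinfun_apply (D (t, g t)) (1,0)) has_derivative
        (\<lambda>t. blinfun_apply (blinfun_apply (D2 (x, g x)) (t *\<^sub>R (1, gd x))) (1,0))) (at x)"
    by (rule bounded_linear.has_derivative[OF blinfun.bounded_linear_left DDp[OF x]])
  moreover have "(\<lambda>t. blinfun_apply (blinfun_apply (D2 (x, g x)) (t *\<^sub>R (1, gd x))) (1,0)) = (\<lambda>t. A' x * t)"
  proof
    fix t
    show "blinfun_apply (blinfun_apply (D2 (x, g x)) (t *\<^sub>R (1, gd x))) (1,0) = A' x * t"
      unfolding blinfun.scaleR_right blinfun.scaleR_left A'_def by simp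
  qed
  ultimately show ?thesis unfolding has_field_derivative_def A_def[abs_def] by simp
qed

lemma B_deriv: assumes x: "x \<in> {0<..<1}" shows "(B has_real_derivative B' x) (at x)"
proof -
  have "((\<lambda>t. blinfun_apply (D (t, g t)) (0,1)) has_derivative
        (\<lambda>t. blinfun_apply (blinfun_apply (D2 (x, g x)) (t *\<^sub>R (1, gd x))) (0,1))) (at x)"
    by (rule bounded_linear.has_derivative[OF blinfun.bounded_linear_left DDp[OF x]])
  moreover have "(\<lambda>t. blinfun_apply (blinfun_apply (D2 (x, g x)) (t *\<^sub>R (1, gd x))) (0,1)) = (\<lambda>t. B' x * t)"
  proof
    fix t
    show "blinfun_apply (blinfun_apply (D2 (x, g x)) (t *\<^sub>R (1, gd x))) (0,1) = B' x * t"
      unfolding blinfun.scaleR_right blinfun.scaleR_left B'_def by simp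
  qed
  ultimately show ?thesis unfolding has_field_derivative_def B_def[abs_def] by simp
qed

definition "gdd x = -((A' x * B x - A x * B' x) / (B x * B x))"

lemma gd_deriv: assumes x: "x \<in> {0<..<1}" shows "(gd has_real_derivative gdd x) (at x)"
proof -
  have "B x \<noteq> 0" using B_bounds[of x] m_pos x by auto
  then have "((\<lambda>t. A t / B t) has_real_derivative (A' x * B x - A x * B' x) / (B x * B x)) (at x)"
    by (rule DERIV_divide[OF A_deriv[OF x] B_deriv[OF x]])
  then show ?thesis unfolding gd_def[abs_def] gdd_def by (rule DERIV_minus)
qed

lemma g_deriv': "x \<in> {0<..<1} \<Longrightarrow> (g has_real_derivative gd x) (at x)"
  using g_deriv by (simp add: gd_def)


lemma gdd_bound: "\<exists>K\<ge>0. \<forall>x\<in>{0<..<1}. \<bar>gdd x\<bar> \<le> K"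
proof -
  define P where "P = (\<lambda>x. (x, g x)) ` {0..1}"
  have cp: "continuous_on {0..1} (\<lambda>x. (x, g x))" by (intro continuous_intros g_cont)
  have Pc: "compact P" unfolding P_def by (rule compact_continuous_image[OF cp]) simp
  have PS: "P \<subseteq> {0..1} \<times> UNIV" unfolding P_def by auto
  have cD: "continuous_on ({0..1} \<times> UNIV) D" using dD by (rule has_derivative_continuous_on)
  have cDP: "compact (D ` P)" by (rule compact_continuous_image[OF continuous_on_subset[OF cD PS] Pc])
  obtain KD where KD: "KD > 0" "\<forall>L\<in>D ` P. norm L \<le> KD"
    using compact_imp_bounded[OF cDP] unfolding bounded_pos by auto
  have cD2P: "compact (D2 ` P)" by (rule compact_continuous_image[OF continuous_on_subset[OF cD2 PS] Pc])
  obtain K2 where K2: "K2 > 0" "\<forall>L\<in>D2 ` P. norm L \<le> K2"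
    using compact_imp_bounded[OF cD2P] unfolding bounded_pos by auto
  define K where "K = 2 * KD * K2 * (1 + KD/m) / m^2"
  have "\<bar>gdd x\<bar> \<le> K" if x: "x \<in> {0<..<1}" for x
  proof -
    have x01: "x \<in> {0..1}" using x by auto
    have inP: "(x, g x) \<in> P" using x01 unfolding P_def by auto
    have nD: "norm (D (x, g x)) \<le> KD" using KD inP by auto
    have nD2: "norm (D2 (x, g x)) \<le> K2" using K2 inP by auto
    have Bb: "m \<le> B x" "B x \<le> gam" using B_bounds x01 by auto
    have n10: "norm (1::real, 0::real) = 1" "norm (0::real, 1::real) = 1" by (simp_all add: norm_Pair)
    have aA: "\<bar>A x\<bar> \<le> KD"
      using norm_blinfun[of "D (x, g x)" "(1,0)"] nD n10 unfolding A_def by simp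
    have aB: "\<bar>B x\<bar> \<le> KD"
      using norm_blinfun[of "D (x, g x)" "(0,1)"] nD n10 unfolding B_def by simp
    have agd: "\<bar>gd x\<bar> \<le> KD / m"
    proof -
      have "\<bar>gd x\<bar> = \<bar>A x\<bar> / B x" using Bb m_pos by (simp add: gd_def abs_div)
      also have "\<dots> \<le> KD / m" using aA Bb m_pos KD by (intro frac_le) auto
      finally show ?thesis .
    qed
    have n1g: "norm (1::real, gd x) \<le> 1 + KD/m" using norm_Pair_le[of "1::real" "gd x"] agd by simp
    have "norm (blinfun_apply (D2 (x, g x)) (1, gd x)) \<le> K2 * (1 + KD/m)"
    proof -
      have "norm (D2 (x, g x)) * norm (1::real, gd x) \<le> K2 * (1 + KD/m)"
        by (rule mult_mono[OF nD2 n1g]) (use K2 in auto)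
      then show ?thesis using norm_blinfun[of "D2 (x, g x)" "(1, gd x)"] by linarith
    qed
    then have aA': "\<bar>A' x\<bar> \<le> K2 * (1 + KD/m)" and aB': "\<bar>B' x\<bar> \<le> K2 * (1 + KD/m)"
      using norm_blinfun[of "blinfun_apply (D2 (x, g x)) (1, gd x)" "(1,0)"]
        norm_blinfun[of "blinfun_apply (D2 (x, g x)) (1, gd x)" "(0,1)"] n10
      unfolding A'_def B'_def by auto
    have KDm: "K2 * (1 + KD/m) \<ge> 0" using K2 KD m_pos by simp
    have num: "\<bar>A' x * B x - A x * B' x\<bar> \<le> 2 * KD * (K2 * (1 + KD/m))"
    proof -
      have "\<bar>A' x * B x\<bar> \<le> K2 * (1 + KD/m) * KD" unfolding abs_mult
        by (rule mult_mono[OF aA' aB]) (use KDm in auto)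
      moreover have "\<bar>A x * B' x\<bar> \<le> KD * (K2 * (1 + KD/m))" unfolding abs_mult
        by (rule mult_mono[OF aA aB']) (use KD in auto)
      moreover have "\<bar>A' x * B x - A x * B' x\<bar> \<le> \<bar>A' x * B x\<bar> + \<bar>A x * B' x\<bar>" by (rule abs_triangle_ineq4)
      moreover have "K2 * (1 + KD/m) * KD + KD * (K2 * (1 + KD/m)) = 2 * KD * (K2 * (1 + KD/m))"
        by (simp add: algebra_simps)
      ultimately show ?thesis by linarith
    qed
    have den: "B x * B x \<ge> m^2" using Bb m_pos by (simp add: power2_eq_square mult_mono)
    have "\<bar>gdd x\<bar> = \<bar>A' x * B x - A x * B' x\<bar> / (B x * B x)"
      using Bb m_pos by (simp add: gdd_def abs_div)
    also have "\<dots> \<le> 2 * KD * (K2 * (1 + KD/m)) / m^2"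
      by (rule frac_le) (use num den m_pos KD KDm in auto)
    also have "\<dots> = K" by (simp add: K_def)
    finally show ?thesis .
  qed
  moreover have "K \<ge> 0" using KD K2 m_pos by (simp add: K_def)
  ultimately show ?thesis by blast
qed


lemma exp_derivs:
  fixes k :: real
  shows "((\<lambda>x. exp (-k*x)) has_real_derivative (-k * exp (-k*x))) (at x)"
    and "((\<lambda>x. exp (-k*(1-x))) has_real_derivative (k * exp (-k*(1-x)))) (at x)"
  by (auto intro!: derivative_eq_intros simp: algebra_simps)

lemma barrier:
  assumes eps: "eps > 0" and bvp: "bvp_solution eps f y"
    and K: "K \<ge> 0" "\<forall>x\<in>{0<..<1}. \<bar>gdd x\<bar> \<le> K"
    and k: "k = sqrt m / eps"
    and x: "x \<in> {0..1}"
  shows "\<bar>y x - g x\<bar> \<le> (\<bar>g 0\<bar> + \<bar>g 1\<bar>) * (exp (-k*x) + exp (-k*(1-x))) + K*eps^2/m"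
proof -
  obtain y' y'' where yd: "\<And>x. x\<in>{0<..<1} \<Longrightarrow> (y has_real_derivative y' x) (at x) \<and>
        (y' has_real_derivative y'' x) (at x) \<and> eps^2 * y'' x = f x (y x)"
    and ycont: "continuous_on {0..1} y" and y0: "y 0 = 0" and y1: "y 1 = 0"
    using bvp unfolding bvp_solution_def by blast
  define M0 where "M0 = \<bar>g 0\<bar> + \<bar>g 1\<bar>"
  have M0: "M0 \<ge> 0" by (simp add: M0_def)
  define phi where "phi x = M0 * (exp (-k*x) + exp (-k*(1-x))) + K*eps^2/m" for x
  define phi1 where "phi1 x = M0 * (-k * exp (-k*x) + k * exp (-k*(1-x)))" for x
  define phi2 where "phi2 x = M0 * (k^2 * (exp (-k*x) + exp (-k*(1-x))))" for x
  have kk: "eps^2 * k^2 = m" using eps m_pos by (simp add: k power_divide)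
  have dphi: "(phi has_real_derivative phi1 t) (at t)" for t
    unfolding phi_def[abs_def] phi1_def
    by (auto intro!: derivative_eq_intros exp_derivs simp: algebra_simps)
  have dphi1: "(phi1 has_real_derivative phi2 t) (at t)" for t
    unfolding phi1_def[abs_def] phi2_def
    by (auto intro!: derivative_eq_intros exp_derivs simp: algebra_simps power2_eq_square)
  have cphi: "continuous_on {0..1} phi" unfolding phi_def[abs_def] by (intro continuous_intros)
  have phipos: "phi t \<ge> 0" for t using M0 K m_pos unfolding phi_def by (simp add: add_nonneg_nonneg)
  have ep2: "eps^2 * phi2 t = m * phi t - K * eps^2" for t
  proof -
    have "eps^2 * phi2 t = M0 * (eps^2 * k^2) * (exp (-k*t) + exp (-k*(1-t)))"
      by (simp add: phi2_def algebra_simps)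
    also have "\<dots> = m * phi t - K * eps^2" using m_pos by (simp add: kk phi_def algebra_simps)
    finally show ?thesis .
  qed
  have b0: "phi 0 \<ge> M0" "phi 1 \<ge> M0"
    using M0 K m_pos unfolding phi_def by (auto simp: add_nonneg_nonneg algebra_simps)
  have eps2: "eps^2 > 0" using eps by simp
  have upper: "phi x - (y x - g x) \<ge> 0"
  proof (rule minprinc[where z = "\<lambda>t. phi t - (y t - g t)" and za = "\<lambda>t. phi1 t - (y' t - gd t)" and zb = "\<lambda>t. phi2 t - (y'' t - gdd t)"])
    show "continuous_on {0..1} (\<lambda>t. phi t - (y t - g t))" by (intro continuous_intros cphi ycont g_cont)
    show "phi 0 - (y 0 - g 0) \<ge> 0" using b0 y0 by (simp add: M0_def)
    show "phi 1 - (y 1 - g 1) \<ge> 0" using b0 y1 by (simp add: M0_def)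
    show "((\<lambda>t. phi t - (y t - g t)) has_real_derivative phi1 t - (y' t - gd t)) (at t)" if "t \<in> {0<..<1}" for t
      using dphi yd[OF that] g_deriv'[OF that] by (intro derivative_intros) auto
    show "((\<lambda>t. phi1 t - (y' t - gd t)) has_real_derivative phi2 t - (y'' t - gdd t)) (at t)" if "t \<in> {0<..<1}" for t
      using dphi1 yd[OF that] gd_deriv[OF that] by (intro derivative_intros) auto
    show "phi2 t - (y'' t - gdd t) < 0" if t: "t \<in> {0<..<1}" and zt: "phi t - (y t - g t) < 0" for t
    proof -
      have t01: "t \<in> {0..1}" using t by auto
      have "y t \<ge> g t" using zt phipos[of t] by linarith
      then have "m * (y t - g t) \<le> f t (y t)" using mono_f[OF t01, of "g t" "y t"] g_root[OF t01] by simp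
      moreover have "eps^2 * y'' t = f t (y t)" using yd[OF t] by blast
      moreover have "eps^2 * gdd t \<le> eps^2 * K" using K(2) t eps2 by (simp add: abs_le_iff)
      ultimately have "eps^2 * (phi2 t - (y'' t - gdd t)) \<le> m * (phi t - (y t - g t))"
        using ep2[of t] by (simp add: algebra_simps)
      also have "\<dots> < 0" using zt m_pos by (simp add: mult_pos_neg)
      finally show ?thesis using eps2 by (simp add: mult_less_0_iff)
    qed
  qed (rule x)
  have lower: "phi x + (y x - g x) \<ge> 0"
  proof (rule minprinc[where z = "\<lambda>t. phi t + (y t - g t)" and za = "\<lambda>t. phi1 t + (y' t - gd t)" and zb = "\<lambda>t. phi2 t + (y'' t - gdd t)"])
    show "continuous_on {0..1} (\<lambda>t. phi t + (y t - g t))" by (intro continuous_intros cphi ycont g_cont)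
    show "phi 0 + (y 0 - g 0) \<ge> 0" using b0 y0 by (simp add: M0_def)
    show "phi 1 + (y 1 - g 1) \<ge> 0" using b0 y1 by (simp add: M0_def)
    show "((\<lambda>t. phi t + (y t - g t)) has_real_derivative phi1 t + (y' t - gd t)) (at t)" if "t \<in> {0<..<1}" for t
      using dphi yd[OF that] g_deriv'[OF that] by (intro derivative_intros) auto
    show "((\<lambda>t. phi1 t + (y' t - gd t)) has_real_derivative phi2 t + (y'' t - gdd t)) (at t)" if "t \<in> {0<..<1}" for t
      using dphi1 yd[OF that] gd_deriv[OF that] by (intro derivative_intros) auto
    show "phi2 t + (y'' t - gdd t) < 0" if t: "t \<in> {0<..<1}" and zt: "phi t + (y t - g t) < 0" for t
    proof -
      have t01: "t \<in> {0..1}" using t by auto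
      have "y t \<le> g t" using zt phipos[of t] by linarith
      then have "m * (g t - y t) \<le> - f t (y t)" using mono_f[OF t01, of "y t" "g t"] g_root[OF t01] by simp
      then have "f t (y t) \<le> m * (y t - g t)" by (simp add: right_diff_distrib)
      moreover have "eps^2 * y'' t = f t (y t)" using yd[OF t] by blast
      moreover have "-(eps^2 * gdd t) \<le> eps^2 * K"
      proof -
        have "- gdd t \<le> K" using K(2) t by (simp add: abs_le_iff)
        then have "eps^2 * (- gdd t) \<le> eps^2 * K" using eps2 by (intro mult_left_mono) auto
        then show ?thesis by simp
      qed
      ultimately have "eps^2 * (phi2 t + (y'' t - gdd t)) \<le> m * (phi t + (y t - g t))"
        using ep2[of t] by (simp add: algebra_simps)
      also have "\<dots> < 0" using zt m_pos by (simp add: mult_pos_neg)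
      finally show ?thesis using eps2 by (simp add: mult_less_0_iff)
    qed
  qed (rule x)
  show ?thesis using upper lower unfolding phi_def M0_def by linarith
qed


lemma f_small: "c \<in> {0..1} \<Longrightarrow> \<bar>f c v\<bar> \<le> gam * \<bar>v - g c\<bar>"
  using lip_f[of c v "g c"] g_root[of c] by simp

lemma g_derivs: "z \<in> {0<..<1} \<Longrightarrow> (g has_real_derivative gd z) (at z) \<and> (gd has_real_derivative gdd z) (at z)"
  using g_deriv' gd_deriv by blast

lemma main:
  assumes C0_pos: "C0 > 0"
  shows "\<exists>C>0. \<forall>eps N y.
           eps > 0 \<and> N > 0 \<and> 4 dvd N \<and>
           shishkin_lambda eps m N = 2 * eps * ln (real N) / sqrt m \<and>
           eps \<le> C0 / real N \<and>
           bvp_solution eps f y \<longrightarrow>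
           (\<forall>i. N div 4 \<le> i \<and> i \<le> N div 2 - 1 \<and>
                (\<forall>j\<in>{i - 1, i, i + 1}.
                   shishkin_mesh eps m N j \<in> {shishkin_mesh eps m N (N div 4) .. 1/2}) \<longrightarrow>
                \<bar>disc_F f gam eps (shishkin_mesh eps m N) N
                    (\<lambda>j. y (shishkin_mesh eps m N j)) i\<bar> \<le> C / (real N)^2)"
proof -
  obtain K where K: "K \<ge> 0" "\<forall>x\<in>{0<..<1}. \<bar>gdd x\<bar> \<le> K" using gdd_bound by blast
  define M0 where "M0 = \<bar>g 0\<bar> + \<bar>g 1\<bar>"
  define C1 where "C1 = 2 * M0 + K * C0^2 / m"
  define t0 where "t0 = sqrt gam / C0"
  define R where "R = 1 + 2 / (cosh t0 - 1)"
  define C where "C = gam * R * (C1 + 2 * K) + gam * (C1 + K) + 1"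
  have t0pos: "t0 > 0" using gam_pos C0_pos by (simp add: t0_def)
  have ct0: "cosh t0 > 1" using cosh_real_nonneg_less_iff[of 0 t0] t0pos by simp
  have Rpos: "R \<ge> 1" using ct0 by (simp add: R_def)
  have C1pos: "C1 \<ge> 0" using K m_pos by (simp add: C1_def M0_def)
  have Cpos: "C > 0" using Rpos C1pos K gam_pos by (simp add: C_def add_nonneg_nonneg add_nonneg_pos)
  show ?thesis
  proof (intro exI[of _ C] conjI allI impI)
    show "C > 0" by (rule Cpos)
    fix eps :: real and N :: nat and y :: "real \<Rightarrow> real" and i :: nat
    assume H: "eps > 0 \<and> N > 0 \<and> 4 dvd N \<and> shishkin_lambda eps m N = 2 * eps * ln (real N) / sqrt m \<and>
           eps \<le> C0 / real N \<and> bvp_solution eps f y"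
    assume Hi: "N div 4 \<le> i \<and> i \<le> N div 2 - 1 \<and>
                (\<forall>j\<in>{i - 1, i, i + 1}.
                   shishkin_mesh eps m N j \<in> {shishkin_mesh eps m N (N div 4) .. 1/2})"
    have eps: "eps > 0" and Npos: "N > 0" and epsN: "eps \<le> C0 / real N" and bvp: "bvp_solution eps f y"
      using H by auto
    obtain k where N4: "N = 4 * k" using H by (auto elim!: dvdE)
    have kpos: "k > 0" using N4 Npos by simp
    define lam where "lam = shishkin_lambda eps m N"
    have lam_eq: "lam = 2 * eps * ln (real N) / sqrt m" using H lam_def by simp
    have lam_le: "lam \<le> 1/4" unfolding lam_def shishkin_lambda_def by simp
    have RN: "real N \<ge> 4" using N4 kpos by simp
    have lnpos: "ln (real N) > 0" using RN by simp
    have lam_pos: "lam > 0" using lnpos eps m_pos lam_eq by simp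
    define h where "h = 2 * (1 - 2 * lam) / real N"
    have h_pos: "h > 0" using lam_le RN by (simp add: h_def)
    have h_low: "h \<ge> 1 / real N" using lam_le RN by (simp add: h_def divide_right_mono)
    have h_up: "h \<le> 2 / real N" using lam_pos RN by (simp add: h_def divide_right_mono)
    define x where "x = shishkin_mesh eps m N"
    have xmid: "x j = lam + real (j - k) * h" if "k \<le> j" "j \<le> 3 * k" for j
      using mesh_mid[OF N4 kpos that] by (simp add: x_def lam_def h_def)
    have xk: "x k = lam" using xmid[of k] by simp
    have d4: "N div 4 = k" "N div 2 = 2 * k" using N4 by auto
    have Hx: "\<And>j. j \<in> {i - 1, i, i + 1} \<Longrightarrow> lam \<le> x j \<and> x j \<le> 1/2"
      using Hi xk d4 unfolding x_def by auto
    have i_ge: "i \<ge> k + 1"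
    proof (rule ccontr)
      assume "\<not> i \<ge> k + 1"
      then have ik: "i = k" using Hi d4 by simp
      have "x (k - 1) = real (k - 1) * (4 * lam / real N)" using mesh_low[OF N4, of "k - 1"] by (simp add: x_def lam_def)
      also have "\<dots> = (real k - 1) * lam / real k" using N4 kpos by (simp add: of_nat_diff)
      also have "\<dots> < lam" using lam_pos kpos by (simp add: field_simps)
      finally show False using Hx[of "i - 1"] ik by simp
    qed
    have "i \<le> 2 * k - 1" using Hi d4 by simp
    then have i_le: "i + 1 \<le> 2 * k" using kpos by linarith
    define xm where "xm = x (i - 1)"
    define xc where "xc = x i"
    define xp where "xp = x (i + 1)"
    have ik1: "k \<le> i - 1" "i - 1 \<le> 3 * k" "k \<le> i" "i \<le> 3 * k" "k \<le> i + 1" "i + 1 \<le> 3 * k"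
      using i_ge i_le by linarith+
    have e1: "i - k = Suc (i - 1 - k)" "i + 1 - k = Suc (i - k)" using i_ge by linarith+
    have xm_e: "xm = lam + real (i - 1 - k) * h" unfolding xm_def by (rule xmid[OF ik1(1,2)])
    have xc_e: "xc = lam + real (i - k) * h" unfolding xc_def by (rule xmid[OF ik1(3,4)])
    have xp_e: "xp = lam + real (i + 1 - k) * h" unfolding xp_def by (rule xmid[OF ik1(5,6)])
    have r1: "real (i - k) = real (i - 1 - k) + 1" "real (i + 1 - k) = real (i - k) + 1"
      by (simp_all only: e1 of_nat_Suc)
    have xc_eq: "xc = xm + h" using xm_e xc_e r1(1) by (simp add: algebra_simps)
    have xp_eq: "xp = xc + h" using xp_e xc_e r1(2) by (simp add: algebra_simps)
    have "lam \<le> x (i - 1)" "x (i + 1) \<le> 1/2" using Hx[of "i - 1"] Hx[of "i + 1"] by simp_all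
    then have xm_ge: "lam \<le> xm" and xp_le: "xp \<le> 1/2" unfolding xm_def xp_def by simp_all
    have gne: "gam \<noteq> 0" using gam_pos by simp
    define be where "be = sqrt gam / eps"
    have be_pos: "be > 0" using gam_pos eps by (simp add: be_def)
    define a where "a = be / sinh (be * h)"
    define d where "d = be / tanh (be * h)"
    define Dd where "Dd = d - a"
    have Dd_pos: "Dd > 0" using coef_ratio(1)[OF be_pos h_pos] by (simp add: Dd_def d_def a_def)
    have ratio: "(a + d) / Dd = (cosh (be*h) + 1) / (cosh (be*h) - 1)"
      using coef_ratio(2)[OF be_pos h_pos] by (simp add: Dd_def d_def a_def)
    have l1: "x i - x (i - 1) = h" using xc_eq by (simp add: xc_def xm_def)
    have l2: "x (i + 1) - x (i + 1 - 1) = h" using xp_eq by (simp add: xp_def xc_def)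
    have sa: "sch_a gam eps x i = a" "sch_a gam eps x (i+1) = a"
      by (simp_all only: sch_a_def sch_beta_def l1 l2 a_def be_def)
    have sd: "sch_d gam eps x i = d" "sch_d gam eps x (i+1) = d"
      by (simp_all only: sch_d_def sch_beta_def l1 l2 d_def be_def)
    have sDd: "sch_Dd gam eps x i = Dd" "sch_Dd gam eps x (i+1) = Dd"
      by (simp_all only: sch_Dd_def sa sd Dd_def)
    have inz: "i \<noteq> 0" "i \<noteq> N" "i < N" using i_ge i_le N4 by linarith+
    define f1 where "f1 = f ((xm + xc) / 2) ((y xm + y xc) / 2)"
    define f2 where "f2 = f ((xc + xp) / 2) ((y xc + y xp) / 2)"
    have F0: "disc_F f gam eps x N (\<lambda>j. y (x j)) i = gam / (Dd + Dd) * ((a + d) / 2 * y xm - ((a + d) / 2 + (a + d) / 2) * y xc + (a + d) / 2 * y xp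
          - Dd / gam * f1 - Dd / gam * f2)"
      unfolding disc_F_def Let_def if_not_P[OF inz(1)] if_not_P[OF inz(2)] if_P[OF inz(3)] sa sd sDd
        xm_def xc_def xp_def f1_def f2_def by simp
    define G where "G = gam * (a + d) / (4 * Dd)"
    have F1: "disc_F f gam eps x N (\<lambda>j. y (x j)) i = G * (y xm - 2 * y xc + y xp) - (f1 + f2) / 2"
      unfolding F0 G_def by (rule Fform[OF gne]) (use Dd_pos in simp)
    have Npos': "real N > 0" using RN by simp
    have eN: "eps * real N \<le> C0" using epsN Npos' by (simp add: le_divide_eq)
    have eNpos: "eps * real N > 0" using eps Npos' by simp
    have tge: "be * h \<ge> t0"
    proof -
      have "be * h \<ge> be * (1 / real N)" using h_low be_pos by (intro mult_left_mono) auto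
      also have "be * (1 / real N) = sqrt gam / (eps * real N)" by (simp add: be_def)
      finally have "be * h \<ge> sqrt gam / (eps * real N)" .
      moreover have "sqrt gam / (eps * real N) \<ge> sqrt gam / C0"
        using eN eNpos gam_pos by (intro divide_left_mono) auto
      ultimately show ?thesis by (simp add: t0_def)
    qed
    have cge: "cosh (be * h) \<ge> cosh t0" using cosh_real_nonneg_le_iff[of t0 "be*h"] tge t0pos by simp
    have cne: "cosh (be*h) - 1 > 0" using cge ct0 by linarith
    have rat2: "(a + d) / Dd = 1 + 2 / (cosh (be*h) - 1)"
    proof -
      define c where "c = cosh (be*h) - 1"
      have cn0: "c \<noteq> 0" using cne unfolding c_def by linarith
      have "(cosh (be*h) + 1) / (cosh (be*h) - 1) = (c + 2) / c" by (simp add: c_def)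
      also have "\<dots> = c / c + 2 / c" by (rule add_divide_distrib)
      also have "\<dots> = 1 + 2 / (cosh (be*h) - 1)" using cn0 by (simp add: c_def)
      finally have "(cosh (be*h) + 1) / (cosh (be*h) - 1) = 1 + 2 / (cosh (be*h) - 1)" .
      then show ?thesis using ratio by simp
    qed
    have ratio_le: "(a + d) / Dd \<le> R"
    proof -
      have "(a + d) / Dd = 1 + 2 / (cosh (be*h) - 1)" by (rule rat2)
      also have "2 / (cosh (be*h) - 1) \<le> 2 / (cosh t0 - 1)" using cge ct0 by (intro divide_left_mono) auto
      finally show ?thesis by (simp add: R_def)
    qed
    have ratio_ge: "(a + d) / Dd \<ge> 0"
    proof -
      have "(a + d) / Dd = 1 + 2 / (cosh (be*h) - 1)" by (rule rat2)
      moreover have "2 / (cosh (be*h) - 1) \<ge> 0" using cge ct0 by simp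
      ultimately show ?thesis by simp
    qed
    have G_eq: "G = gam / 4 * ((a + d) / Dd)" by (simp add: G_def)
    have "gam / 4 * ((a + d) / Dd) \<le> gam / 4 * R" using ratio_le gam_pos by (intro mult_left_mono) auto
    moreover have "0 \<le> gam / 4 * ((a + d) / Dd)" using ratio_ge gam_pos by (intro mult_nonneg_nonneg) auto
    ultimately have G_bounds: "0 \<le> G" "G \<le> gam * R / 4" unfolding G_eq by simp_all
    define n2 where "n2 = (real N)^2"
    have n2pos: "n2 > 0" using Npos' by (simp add: n2_def)
    define Phi where "Phi = C1 / n2"
    have wb: "\<bar>y z - g z\<bar> \<le> Phi" if z: "lam \<le> z" "z \<le> 1/2" for z
    proof -
      define kk where "kk = sqrt m / eps"
      have kkpos: "kk > 0" using m_pos eps by (simp add: kk_def)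
      have z01: "z \<in> {0..1}" using z lam_pos by auto
      have B: "\<bar>y z - g z\<bar> \<le> M0 * (exp (-kk*z) + exp (-kk*(1-z))) + K*eps^2/m"
        using barrier[OF eps bvp K(1) K(2) kk_def z01] by (simp add: M0_def)
      have kl: "kk * lam = 2 * ln (real N)" using m_pos eps by (simp add: kk_def lam_eq)
      have el: "exp (-kk*lam) = 1 / n2"
      proof -
        have ee: "exp (ln (real N) + ln (real N)) = n2"
          unfolding exp_add exp_ln[OF Npos'] n2_def power2_eq_square ..
        have kl2: "-kk*lam = -(ln (real N) + ln (real N))" using kl by simp
        have "exp (-kk*lam) = exp (-(ln (real N) + ln (real N)))" by (simp only: kl2)
        also have "\<dots> = inverse (exp (ln (real N) + ln (real N)))" by (rule exp_minus)
        also have "\<dots> = inverse n2" by (simp only: ee)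
        also have "\<dots> = 1 / n2" by (simp add: divide_inverse)
        finally show ?thesis .
      qed
      have "kk*lam \<le> kk*z" using z kkpos by (intro mult_left_mono) auto
      then have "-kk*z \<le> -kk*lam" by simp
      then have e1: "exp (-kk*z) \<le> 1 / n2" unfolding el[symmetric] by simp
      have "kk*lam \<le> kk*(1-z)" using z kkpos lam_le by (intro mult_left_mono) auto
      then have "-kk*(1-z) \<le> -kk*lam" by simp
      then have e2: "exp (-kk*(1-z)) \<le> 1 / n2" unfolding el[symmetric] by simp
      have M0pos: "M0 \<ge> 0" by (simp add: M0_def)
      have "eps \<le> C0 / real N" by (rule epsN)
      then have "eps^2 \<le> (C0 / real N)^2" using eps by (intro power_mono) auto
      then have ep2: "eps^2 \<le> C0^2 / n2" by (simp add: n2_def power_divide)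
      have "M0 * (exp (-kk*z) + exp (-kk*(1-z))) \<le> M0 * (2 / n2)"
        using e1 e2 M0pos by (intro mult_left_mono) auto
      moreover have "K*eps^2/m \<le> K * (C0^2 / n2) / m"
        using ep2 K(1) m_pos by (intro divide_right_mono mult_left_mono) auto
      ultimately have "\<bar>y z - g z\<bar> \<le> M0 * (2 / n2) + K * (C0^2 / n2) / m" using B by linarith
      also have "\<dots> = Phi" by (simp add: Phi_def C1_def add_divide_distrib mult.commute)
      finally show ?thesis .
    qed
    have xm_pos: "xm > 0" using xm_ge lam_pos by linarith
    have gok: "(g has_real_derivative gd z) (at z) \<and> (gd has_real_derivative gdd z) (at z) \<and> \<bar>gdd z\<bar> \<le> K"
      if "z \<in> {xm..xp}" for z
    proof -
      have "z \<in> {0<..<1}" using that xm_pos xp_le by auto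
      then show ?thesis using g_derivs K(2) by blast
    qed
    have sd1: "\<bar>g xp - 2 * g xc + g xm\<bar> \<le> 2 * K * h^2"
    proof -
      have "\<bar>g (xc + h) - 2 * g xc + g (xc - h)\<bar> \<le> 2 * K * h^2"
        by (rule sdiff[OF h_pos, where ga = gd and gb = gdd]) (use gok xc_eq xp_eq in auto)
      then show ?thesis using xc_eq xp_eq by simp
    qed
    define c1 where "c1 = (xm + xc) / 2"
    define c2 where "c2 = (xc + xp) / 2"
    have hh: "2 * K * (h/2)^2 = K * h^2 / 2" by (simp add: power2_eq_square)
    have h2p: "h/2 > 0" using h_pos by simp
    have sd2: "\<bar>g xc - 2 * g c1 + g xm\<bar> \<le> K * h^2 / 2"
    proof -
      have ee: "c1 + h/2 = xc" "c1 - h/2 = xm" using xc_eq by (simp_all add: c1_def field_simps)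
      have sub: "{xm..xc} \<subseteq> {xm..xp}" using xc_eq xp_eq h_pos by auto
      have "\<bar>g (c1 + h/2) - 2 * g c1 + g (c1 - h/2)\<bar> \<le> 2 * K * (h/2)^2"
        by (rule sdiff[OF h2p, where ga = gd and gb = gdd]) (use gok sub in \<open>auto simp: ee\<close>)
      then show ?thesis using hh ee by simp
    qed
    have sd3: "\<bar>g xp - 2 * g c2 + g xc\<bar> \<le> K * h^2 / 2"
    proof -
      have ee: "c2 + h/2 = xp" "c2 - h/2 = xc" using xp_eq by (simp_all add: c2_def field_simps)
      have sub: "{xc..xp} \<subseteq> {xm..xp}" using xc_eq xp_eq h_pos by auto
      have "\<bar>g (c2 + h/2) - 2 * g c2 + g (c2 - h/2)\<bar> \<le> 2 * K * (h/2)^2"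
        by (rule sdiff[OF h2p, where ga = gd and gb = gdd]) (use gok sub in \<open>auto simp: ee\<close>)
      then show ?thesis using hh ee by simp
    qed
    have wm: "\<bar>y xm - g xm\<bar> \<le> Phi" using wb xm_ge xc_eq xp_eq xp_le h_pos by simp
    have wc: "\<bar>y xc - g xc\<bar> \<le> Phi" using wb[of xc] xm_ge xc_eq xp_eq xp_le h_pos by simp
    have wp: "\<bar>y xp - g xp\<bar> \<le> Phi" using wb[of xp] xm_ge xc_eq xp_eq xp_le h_pos by simp
    have dy: "\<bar>y xm - 2 * y xc + y xp\<bar> \<le> 4 * Phi + 2 * K * h^2"
      using wm wc wp sd1 unfolding abs_le_iff by (intro conjI; linarith)
    have c1r: "c1 \<in> {0..1}" "c2 \<in> {0..1}" using xm_pos xc_eq xp_eq xp_le h_pos by (auto simp: c1_def c2_def)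
    have v1: "\<bar>(y xm + y xc) / 2 - g c1\<bar> \<le> Phi + K * h^2 / 4"
    proof -
      define qq where "qq = K * h^2 / 2"
      have "\<bar>y xm + y xc - 2 * g c1\<bar> \<le> 2 * Phi + qq"
        using wm wc sd2 unfolding abs_le_iff qq_def[symmetric] by (intro conjI; linarith)
      then have "\<bar>y xm + y xc - 2 * g c1\<bar> / 2 \<le> (2 * Phi + qq) / 2" by (rule divide_right_mono) simp
      moreover have eqn: "(y xm + y xc) / 2 - g c1 = (y xm + y xc - 2 * g c1) / 2" by (simp add: field_simps)
      moreover have "\<bar>(y xm + y xc - 2 * g c1) / 2\<bar> = \<bar>y xm + y xc - 2 * g c1\<bar> / 2" by simp
      ultimately have "\<bar>(y xm + y xc) / 2 - g c1\<bar> \<le> (2 * Phi + qq) / 2" by metis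
      then show ?thesis by (simp add: qq_def field_simps)
    qed
    have v2: "\<bar>(y xc + y xp) / 2 - g c2\<bar> \<le> Phi + K * h^2 / 4"
    proof -
      define qq where "qq = K * h^2 / 2"
      have "\<bar>y xc + y xp - 2 * g c2\<bar> \<le> 2 * Phi + qq"
        using wc wp sd3 unfolding abs_le_iff qq_def[symmetric] by (intro conjI; linarith)
      then have "\<bar>y xc + y xp - 2 * g c2\<bar> / 2 \<le> (2 * Phi + qq) / 2" by (rule divide_right_mono) simp
      moreover have eqn: "(y xc + y xp) / 2 - g c2 = (y xc + y xp - 2 * g c2) / 2" by (simp add: field_simps)
      moreover have "\<bar>(y xc + y xp - 2 * g c2) / 2\<bar> = \<bar>y xc + y xp - 2 * g c2\<bar> / 2" by simp
      ultimately have "\<bar>(y xc + y xp) / 2 - g c2\<bar> \<le> (2 * Phi + qq) / 2" by metis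
      then show ?thesis by (simp add: qq_def field_simps)
    qed
    have f1b: "\<bar>f1\<bar> \<le> gam * (Phi + K * h^2 / 4)"
    proof -
      have "\<bar>f1\<bar> \<le> gam * \<bar>(y xm + y xc) / 2 - g c1\<bar>" unfolding f1_def c1_def[symmetric] by (rule f_small[OF c1r(1)])
      also have "\<dots> \<le> gam * (Phi + K * h^2 / 4)" using v1 gam_pos by (intro mult_left_mono) auto
      finally show ?thesis .
    qed
    have f2b: "\<bar>f2\<bar> \<le> gam * (Phi + K * h^2 / 4)"
    proof -
      have "\<bar>f2\<bar> \<le> gam * \<bar>(y xc + y xp) / 2 - g c2\<bar>" unfolding f2_def c2_def[symmetric] by (rule f_small[OF c1r(2)])
      also have "\<dots> \<le> gam * (Phi + K * h^2 / 4)" using v2 gam_pos by (intro mult_left_mono) auto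
      finally show ?thesis .
    qed
    have h2: "h^2 \<le> 4 / n2"
    proof -
      have "h^2 \<le> (2 / real N)^2" using h_up h_pos by (intro power_mono) auto
      then show ?thesis by (simp add: n2_def power_divide)
    qed
    have Kh: "K * h^2 \<le> K * (4 / n2)" using h2 K(1) by (intro mult_left_mono) auto
    have Phipos: "Phi \<ge> 0" using C1pos n2pos by (simp add: Phi_def)
    have gR: "gam * R / 4 \<ge> 0" using gam_pos Rpos by simp
    have t1: "G * \<bar>y xm - 2 * y xc + y xp\<bar> \<le> gam * R / 4 * (4 * Phi + 2 * K * (4 / n2))"
    proof -
      have "G * \<bar>y xm - 2 * y xc + y xp\<bar> \<le> gam * R / 4 * (4 * Phi + 2 * K * h^2)"
        by (rule mult_mono[OF G_bounds(2) dy gR]) simp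
      also have "\<dots> \<le> gam * R / 4 * (4 * Phi + 2 * K * (4 / n2))"
        using Kh gR by (intro mult_left_mono) auto
      finally show ?thesis .
    qed
    have t2: "(\<bar>f1\<bar> + \<bar>f2\<bar>) / 2 \<le> gam * (Phi + K * (4 / n2) / 4)"
    proof -
      have "gam * (Phi + K * h^2 / 4) \<le> gam * (Phi + K * (4 / n2) / 4)"
        using Kh gam_pos by (intro mult_left_mono) auto
      then show ?thesis using avg_le[OF f1b f2b] by simp
    qed
    have Fx: "\<bar>disc_F f gam eps x N (\<lambda>j. y (x j)) i\<bar> \<le> G * \<bar>y xm - 2 * y xc + y xp\<bar> + (\<bar>f1\<bar> + \<bar>f2\<bar>) / 2"
    proof -
      have "\<bar>G * (y xm - 2 * y xc + y xp) - (f1 + f2) / 2\<bar> \<le> \<bar>G * (y xm - 2 * y xc + y xp)\<bar> + \<bar>(f1 + f2) / 2\<bar>"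
        by (rule abs_triangle_ineq4)
      also have "\<dots> \<le> G * \<bar>y xm - 2 * y xc + y xp\<bar> + (\<bar>f1\<bar> + \<bar>f2\<bar>) / 2"
        using G_bounds(1) by (simp add: abs_mult)
      finally show ?thesis unfolding F1 .
    qed
    have fin: "gam * R / 4 * (4 * Phi + 2 * K * (4 / n2)) + gam * (Phi + K * (4 / n2) / 4) = (C - 1) / n2"
      using n2pos by (simp add: Phi_def C_def field_simps)
    have "\<bar>disc_F f gam eps x N (\<lambda>j. y (x j)) i\<bar> \<le> G * \<bar>y xm - 2 * y xc + y xp\<bar> + (\<bar>f1\<bar> + \<bar>f2\<bar>) / 2"
      by (rule Fx)
    also have "\<dots> \<le> gam * R / 4 * (4 * Phi + 2 * K * (4 / n2)) + gam * (Phi + K * (4 / n2) / 4)"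
      by (rule add_mono[OF t1 t2])
    also have "\<dots> = (C - 1) / n2" by (rule fin)
    also have "\<dots> \<le> C / n2" using n2pos by (simp add: divide_right_mono)
    finally show "\<bar>disc_F f gam eps (shishkin_mesh eps m N) N (\<lambda>j. y (shishkin_mesh eps m N j)) i\<bar> \<le> C / (real N)^2"
      by (simp add: x_def n2_def)
  qed
qed

end

theorem lemma1:
  fixes f fy :: "real \<Rightarrow> real \<Rightarrow> real" and m gam C0 :: real
  assumes f_C2: "C2_on ({0..1} \<times> UNIV) (\<lambda>p. f (fst p) (snd p))"
    and fy_deriv: "\<forall>x\<in>{0..1}. \<forall>v. (f x has_real_derivative fy x v) (at v)"
    and m_pos: "m > 0"
    and fy_lower: "\<forall>x\<in>{0..1}. \<forall>v. m \<le> fy x v"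
    and fy_upper: "\<forall>x\<in>{0..1}. \<forall>v. fy x v \<le> gam"
    and C0_pos: "C0 > 0"
  shows "\<exists>C>0. \<forall>eps N y.
           eps > 0 \<and> N > 0 \<and> 4 dvd N \<and>
           shishkin_lambda eps m N = 2 * eps * ln (real N) / sqrt m \<and>
           eps \<le> C0 / real N \<and>
           bvp_solution eps f y \<longrightarrow>
           (\<forall>i. N div 4 \<le> i \<and> i \<le> N div 2 - 1 \<and>
                (\<forall>j\<in>{i - 1, i, i + 1}.
                   shishkin_mesh eps m N j \<in> {shishkin_mesh eps m N (N div 4) .. 1/2}) \<longrightarrow>
                \<bar>disc_F f gam eps (shishkin_mesh eps m N) N
                    (\<lambda>j. y (shishkin_mesh eps m N j)) i\<bar> \<le> C / (real N)^2)"
proof -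
  obtain D D2 where dF: "\<forall>p\<in>{0..1} \<times> UNIV. ((\<lambda>p. f (fst p) (snd p)) has_derivative blinfun_apply (D p)) (at p within {0..1} \<times> UNIV)"
    and dD: "\<forall>p\<in>{0..1} \<times> UNIV. (D has_derivative blinfun_apply (D2 p)) (at p within {0..1} \<times> UNIV)"
    and cD2: "continuous_on ({0..1} \<times> UNIV) D2"
    using f_C2 unfolding C2_on_def by blast
  interpret setting f fy m gam D D2
    by unfold_locales (use dF dD cD2 fy_deriv m_pos fy_lower fy_upper in auto)
  show ?thesis by (rule main[OF C0_pos])
qed

end
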